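(* Let $\psi$ be any real-valued function of $r$ and $\varphi(s,r)=s+\psi(r)$. Fix $r>0$ and for $s>-\psi(r)$ put $$f(s,r)=\dfrac{1}{2\varphi(s,r)+2\,\mathop{K}\limits_{n=1}^{\infty}\left(\dfrac{n^2r^2}{\varphi(s,r)}\right)}.$$ Then $f(\cdot,r)$ is the unique solution of the functional equation $$f(s,r)+f(s+2r,r)=\frac{1}{\varphi(s,r)+r}\qquad(s>-\psi(r))$$ satisfying $\lim_{s\to\infty}f(s,r)=0$.
   Context: $\mathop{K}_{n=1}^{\infty}\left(\frac{a_n}{b}\right)$ denotes the continued fraction $\cfrac{a_1}{b+\cfrac{a_2}{b+\cdots}}$ (limit of convergents). *)

theory Defs
  imports Complex_Main
begin

fun cf_aux :: "(nat \<Rightarrow> real) \<Rightarrow> real \<Rightarrow> nat \<Rightarrow> nat \<Rightarrow> real" where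
  "cf_aux a b k 0 = 0"
| "cf_aux a b k (Suc m) = a k / (b + cf_aux a b (Suc k) m)"

definition cf_conv :: "(nat \<Rightarrow> real) \<Rightarrow> real \<Rightarrow> nat \<Rightarrow> real" where
  "cf_conv a b N = cf_aux a b 1 N"

definition cfK :: "(nat \<Rightarrow> real) \<Rightarrow> real \<Rightarrow> real" where
  "cfK a b = lim (cf_conv a b)"

definition phi :: "(real \<Rightarrow> real) \<Rightarrow> real \<Rightarrow> real \<Rightarrow> real" where
  "phi \<psi> s r = s + \<psi> r"

definition fcf :: "(real \<Rightarrow> real) \<Rightarrow> real \<Rightarrow> real \<Rightarrow> real" where
  "fcf \<psi> s r = 1 / (2 * phi \<psi> s r + 2 * cfK (\<lambda>n. (real n)^2 * r^2) (phi \<psi> s r))"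

end

theory Submission imports Defs "HOL-Analysis.Analysis" begin

fun cfw :: "(nat \<Rightarrow> real) \<Rightarrow> real \<Rightarrow> nat \<Rightarrow> nat \<Rightarrow> real \<Rightarrow> real" where
  "cfw a b k 0 w = w"
| "cfw a b k (Suc m) w = a k / (b + cfw a b (Suc k) m w)"

lemma cf_aux_cfw: "cf_aux a b k m = cfw a b k m 0"
  by (induction m arbitrary: k) auto

lemma cfw_snoc: "cfw a b k (Suc m) w = cfw a b k m (a (k+m) / (b + w))"
  by (induction m arbitrary: k) auto

lemma cfw_nonneg: "(\<And>n. a n \<ge> 0) \<Longrightarrow> b > 0 \<Longrightarrow> w \<ge> 0 \<Longrightarrow> cfw a b k m w \<ge> 0"
  by (induction m arbitrary: k) auto

fun AA :: "(nat \<Rightarrow> real) \<Rightarrow> real \<Rightarrow> nat \<Rightarrow> real" where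
  "AA a b 0 = 0" | "AA a b (Suc 0) = a 1"
| "AA a b (Suc (Suc n)) = b * AA a b (Suc n) + a (n+2) * AA a b n"

fun BB :: "(nat \<Rightarrow> real) \<Rightarrow> real \<Rightarrow> nat \<Rightarrow> real" where
  "BB a b 0 = 1" | "BB a b (Suc 0) = b"
| "BB a b (Suc (Suc n)) = b * BB a b (Suc n) + a (n+2) * BB a b n"

lemma BB_pos2: "(\<And>n. a n \<ge> 0) \<Longrightarrow> b > 0 \<Longrightarrow> BB a b n > 0 \<and> BB a b (Suc n) > 0"
proof (induction n)
  case 0 then show ?case by auto
next
  case (Suc n)
  then have "a (Suc (Suc n)) * BB a b n \<ge> 0" by (simp add: less_imp_le)
  moreover have "b * BB a b (Suc n) > 0" using Suc by auto
  ultimately show ?case using Suc by (simp add: add_pos_nonneg)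
qed

lemma BB_pos: "(\<And>n. a n \<ge> 0) \<Longrightarrow> b > 0 \<Longrightarrow> BB a b n > 0"
  using BB_pos2 by blast

lemma cfw_formula:
  assumes a: "\<And>n. a n \<ge> 0" and b: "b > 0"
  shows "w \<ge> 0 \<Longrightarrow> cfw a b 1 (Suc M) w = (AA a b (Suc M) + w * AA a b M) / (BB a b (Suc M) + w * BB a b M)"
proof (induction M arbitrary: w)
  case 0 then show ?case by simp
next
  case (Suc M)
  define t where "t = a (M+2) / (b + w)"
  have bw: "b + w > 0" using Suc b by auto
  have t0: "t \<ge> 0" unfolding t_def using a bw by auto
  have "cfw a b 1 (Suc (Suc M)) w = cfw a b 1 (Suc M) t"
    by (subst cfw_snoc) (simp add: t_def)
  also have "\<dots> = (AA a b (Suc M) + t * AA a b M) / (BB a b (Suc M) + t * BB a b M)"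
    using Suc.IH t0 by simp
  also have "\<dots> = ((b+w) * AA a b (Suc M) + a (M+2) * AA a b M) / ((b+w) * BB a b (Suc M) + a (M+2) * BB a b M)"
  proof -
    have p1: "BB a b (Suc M) > 0" "BB a b M > 0" using BB_pos[OF a b] by auto
    have d: "BB a b (Suc M) + t * BB a b M > 0" using p1 t0 by (simp add: add_pos_nonneg)
    have e: "(b+w) * t = a (M+2)" unfolding t_def using bw by simp
    have "(AA a b (Suc M) + t * AA a b M) / (BB a b (Suc M) + t * BB a b M)
       = ((b+w) * (AA a b (Suc M) + t * AA a b M)) / ((b+w) * (BB a b (Suc M) + t * BB a b M))"
      using bw by simp
    also have "\<dots> = ((b+w) * AA a b (Suc M) + a (M+2) * AA a b M) / ((b+w) * BB a b (Suc M) + a (M+2) * BB a b M)"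
      by (simp add: distrib_left e flip: mult.assoc)
    finally show ?thesis .
  qed
  also have "\<dots> = (AA a b (Suc (Suc M)) + w * AA a b (Suc M)) / (BB a b (Suc (Suc M)) + w * BB a b (Suc M))"
    by (simp add: algebra_simps)
  finally show ?case .
qed

lemma conv_formula:
  assumes a: "\<And>n. a n \<ge> 0" and b: "b > 0"
  shows "cf_conv a b N = AA a b N / BB a b N"
proof (cases N)
  case 0 then show ?thesis by (simp add: cf_conv_def)
next
  case (Suc M) then show ?thesis
    using cfw_formula[OF a b, where w=0 and M=M] by (simp add: cf_conv_def cf_aux_cfw)
qed

lemma det_formula: "AA a b (Suc n) * BB a b n - AA a b n * BB a b (Suc n) = (-1)^n * (\<Prod>k=1..Suc n. a k)"
proof (induction n)
  case 0 then show ?case by simp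
next
  case (Suc n)
  have "AA a b (Suc (Suc n)) * BB a b (Suc n) - AA a b (Suc n) * BB a b (Suc (Suc n))
     = - a (n+2) * (AA a b (Suc n) * BB a b n - AA a b n * BB a b (Suc n))"
    by (simp add: algebra_simps)
  also have "\<dots> = (-1)^(Suc n) * ((\<Prod>k=1..Suc n. a k) * a (Suc (Suc n)))"
    using Suc by simp
  also have "\<dots> = (-1)^(Suc n) * (\<Prod>k=1..Suc (Suc n). a k)"
    by (simp add: prod.cl_ivl_Suc)  
  finally show ?case .
qed


definition sq :: "real \<Rightarrow> nat \<Rightarrow> real" where "sq r = (\<lambda>n. (real n)^2 * r^2)"

lemma sq_nonneg: "sq r n \<ge> 0" by (simp add: sq_def)

lemma P_fact: "prod (sq r) {1..n} = (fact n)^2 * r^(2*n)"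
proof (induction n)
  case 0 then show ?case by simp
next
  case (Suc n)
  have "prod (sq r) {1..Suc n} = prod (sq r) {1..n} * sq r (Suc n)"
    by (simp add: prod.cl_ivl_Suc)
  also have "\<dots> = (fact (Suc n))^2 * r^(2 * Suc n)"
    using Suc by (simp add: sq_def algebra_simps power2_eq_square power_mult_distrib)
  finally show ?case .
qed

context
  fixes r x :: real
  assumes r: "r > 0" and x: "x > 0"
begin

abbreviation "B \<equiv> BB (sq r) x"
abbreviation "c \<equiv> min 1 (x^2 / (2 * r^2))"

lemma Bpos: "B n > 0" using BB_pos[of "sq r" x] sq_nonneg x by blast

lemma B_rec_lower: "B (Suc (Suc m)) \<ge> (real m + 2)^2 * r^2 * B m"
proof -
  have "x * B (Suc m) \<ge> 0" using Bpos x by (simp add: less_imp_le)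
  moreover have "B (Suc (Suc m)) = x * B (Suc m) + (real m + 2)^2 * r^2 * B m"
    by (simp add: sq_def add.commute)
  ultimately show ?thesis by linarith
qed

lemma B_lower2: "B m ^2 \<ge> c * (real m + 1) * (fact m)^2 * r^(2*m) \<and>
   B (Suc m) ^2 \<ge> c * (real (Suc m) + 1) * (fact (Suc m))^2 * r^(2*Suc m)"
proof (induction m)
  case 0
  have "c * 2 * r^2 \<le> (x^2/(2*r^2)) * 2 * r^2"
    using r by (intro mult_right_mono) auto
  also have "\<dots> = x^2" using r by simp
  finally show ?case by simp
next
  case (Suc m)
  have IH: "B m ^2 \<ge> c * (real m + 1) * (fact m)^2 * r^(2*m)" using Suc by simp
  have c0: "c \<ge> 0" by simp
  define Q where "Q = c * (fact m)^2 * r^(2*m)"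
  have Q0: "Q \<ge> 0" unfolding Q_def using c0 r by simp
  have h1: "B (Suc (Suc m)) ^2 \<ge> ((real m + 2)^2 * r^2 * B m)^2"
    using B_rec_lower[of m] Bpos[of m] r by (intro power_mono) auto
  have h2: "((real m + 2)^2 * r^2 * B m)^2 = (real m + 2)^4 * r^4 * B m^2"
    by (simp add: power_mult_distrib flip: power_mult)
  have h3: "(real m + 2)^4 * r^4 * B m^2 \<ge> (real m + 2)^4 * r^4 * ((real m + 1) * Q)"
    using IH by (intro mult_left_mono) (auto simp: Q_def algebra_simps)
  have h4: "(real m + 3) * (real m + 1) \<le> (real m + 2)^2" by (simp add: power2_eq_square algebra_simps)
  have h5: "(real m + 2)^4 * r^4 * ((real m + 1) * Q) \<ge> Q * r^4 * (real m + 2)^2 * (real m + 1) * ((real m + 3) * (real m + 1))"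
  proof -
    have "Q * r^4 * (real m + 2)^2 * (real m + 1) * ((real m + 3) * (real m + 1))
        \<le> Q * r^4 * (real m + 2)^2 * (real m + 1) * ((real m + 2)^2)"
      using h4 Q0 by (intro mult_left_mono) auto
    also have "\<dots> = (real m + 2)^4 * r^4 * ((real m + 1) * Q)"
      by (simp add: eval_nat_numeral algebra_simps)
    finally show ?thesis .
  qed
  have h6: "c * (real (Suc (Suc m)) + 1) * (fact (Suc (Suc m)))^2 * r^(2*Suc (Suc m))
      = Q * r^4 * (real m + 2)^2 * (real m + 1) * ((real m + 3) * (real m + 1))"
  proof -
    have f: "(fact (Suc (Suc m)) :: real) = (real m + 2) * (real m + 1) * fact m"
      by (simp add: algebra_simps)
    have p: "r^(2*Suc (Suc m)) = r^(2*m) * r^4"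
    proof -
      have "2*Suc (Suc m) = 2*m+4" by simp
      then show ?thesis by (simp only: power_add)
    qed
    have rr: "real (Suc (Suc m)) + 1 = real m + 3" by simp
    show ?thesis unfolding Q_def f p rr by (simp add: power2_eq_square algebra_simps)
  qed
  show ?case
  proof (rule conjI)
    show "B (Suc m) ^2 \<ge> c * (real (Suc m) + 1) * (fact (Suc m))^2 * r^(2*Suc m)" using Suc by blast
    show "B (Suc (Suc m)) ^2 \<ge> c * (real (Suc (Suc m)) + 1) * (fact (Suc (Suc m)))^2 * r^(2*Suc (Suc m))"
      using h1 h2 h3 h5 h6 by linarith
  qed
qed

lemma B_lower: "B m ^2 \<ge> c * (real m + 1) * (fact m)^2 * r^(2*m)"
  using B_lower2 by blast


abbreviation "P n \<equiv> prod (sq r) {1..n}"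

lemma Ppos: "P n > 0"
  unfolding P_fact using r by simp

lemma sqpos: "n > 0 \<Longrightarrow> sq r n > 0" using r by (simp add: sq_def)

definition u :: "nat \<Rightarrow> real" where "u n = B (Suc n) * B n / P (Suc n)"

lemma u_pos: "u n > 0" unfolding u_def by (rule divide_pos_pos[OF mult_pos_pos[OF Bpos Bpos] Ppos])

lemma u_step: "u (Suc n) = u n + x * B (Suc n)^2 / P (Suc (Suc n))"
proof -
  have b: "B (Suc (Suc n)) = x * B (Suc n) + sq r (Suc (Suc n)) * B n" by (simp add: add.commute)
  have p: "P (Suc (Suc n)) = P (Suc n) * sq r (Suc (Suc n))" by (simp add: prod.cl_ivl_Suc)
  have alg: "\<And>b1 b0 pn a::real. pn > 0 \<Longrightarrow> a > 0 \<Longrightarrow>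
      (x*b1 + a*b0)*b1/(pn*a) = b1*b0/pn + x*b1^2/(pn*a)"
    by (simp add: field_simps power2_eq_square)
  have "sq r (Suc (Suc n)) > 0" using sqpos by simp
  then show ?thesis unfolding u_def b p using alg[OF Ppos[of "Suc n"]] by simp
qed

lemma u_incr_lower: "x * B (Suc n)^2 / P (Suc (Suc n)) \<ge> (x * c / r^2) / (real n + 2)"
proof -
  define F where "F = (fact (Suc n) :: real)^2 * r^(2*Suc n)"
  have F0: "F > 0" unfolding F_def using r by simp
  have hB: "B (Suc n)^2 \<ge> c * (real n + 2) * F"
    using B_lower[of "Suc n"] unfolding F_def by (simp add: mult.assoc add.commute)
  have hP: "P (Suc (Suc n)) = (real n + 2)^2 * r^2 * F"
  proof -
    have "P (Suc (Suc n)) = P (Suc n) * sq r (Suc (Suc n))" by (simp add: prod.cl_ivl_Suc)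
    also have "\<dots> = F * ((real n + 2)^2 * r^2)" unfolding F_def P_fact by (simp add: sq_def add.commute)
    finally show ?thesis by simp
  qed
  have "(x * c / r^2) / (real n + 2) = x * (c * (real n + 2) * F) / ((real n + 2)^2 * r^2 * F)"
  proof -
    have e1: "x * (c * (real n + 2) * F) = ((real n + 2) * F) * (x * c)" by (simp add: algebra_simps)
    have e2: "(real n + 2)^2 * r^2 * F = ((real n + 2) * F) * ((real n + 2) * r^2)"
      by (simp add: power2_eq_square algebra_simps)
    have nz: "(real n + 2) * F \<noteq> 0" using F0 by simp
    show ?thesis unfolding e1 e2 using nz by (simp add: divide_divide_eq_left mult.commute)
  qed
  also have "\<dots> \<le> x * B (Suc n)^2 / ((real n + 2)^2 * r^2 * F)"
    using hB x F0 r by (intro divide_right_mono mult_left_mono) auto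
  finally show ?thesis unfolding hP .
qed

lemma ln_step: "ln (real n + 3) - ln (real n + 2) \<le> 1 / (real n + 2)"
proof -
  have "real n + 3 = (real n + 2) * (1 + 1/(real n + 2))" by (simp add: field_simps)
  then have "ln (real n + 3) = ln ((real n + 2) * (1 + 1/(real n + 2)))" by simp
  also have "\<dots> = ln (real n + 2) + ln (1 + 1/(real n + 2))"
    by (rule ln_mult_pos) (auto simp: add_pos_pos)
  finally have "ln (real n + 3) = ln (real n + 2) + ln (1 + 1/(real n + 2))" .
  moreover have "ln (1 + 1/(real n + 2)) \<le> 1/(real n + 2)"
    by (rule ln_add_one_self_le_self) simp
  ultimately show ?thesis by simp
qed

lemma u_lower: "u n \<ge> (x * c / r^2) * (ln (real n + 2) - ln 2)"
proof (induction n)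
  case 0 then show ?case using u_pos[of 0] by simp
next
  case (Suc n)
  have K0: "x * c / r^2 \<ge> 0" using x r by simp
  have "(x * c / r^2) * (ln (real (Suc n) + 2) - ln 2)
     = (x * c / r^2) * (ln (real n + 2) - ln 2) + (x * c / r^2) * (ln (real n + 3) - ln (real n + 2))"
  proof -
    have "real (Suc n) + 2 = real n + 3" by simp
    moreover have "\<And>K a b d::real. K*(a-d) = K*(b-d) + K*(a-b)" by algebra
    ultimately show ?thesis by metis
  qed
  also have "\<dots> \<le> u n + (x * c / r^2) * (1 / (real n + 2))"
    using Suc ln_step[of n] K0 by (intro add_mono mult_left_mono) auto
  also have "\<dots> \<le> u (Suc n)" using u_step[of n] u_incr_lower[of n] by simp
  finally show ?case .
qed

lemma u_at_top: "filterlim u at_top sequentially"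
proof -
  have K0: "x * c / r^2 > 0" using x r by simp
  have l1: "filterlim (\<lambda>n. real n + 2) at_top sequentially"
    by (rule filterlim_at_top_mono[OF filterlim_real_sequentially]) auto
  have l2: "filterlim (\<lambda>n. ln (real n + 2)) at_top sequentially"
    using filterlim_compose[OF ln_at_top l1] by simp
  have l3: "filterlim (\<lambda>n. ln (real n + 2) - ln 2) at_top sequentially"
  proof -
    have eq: "(\<lambda>n. ln (real n + 2) - ln 2) = (\<lambda>n. - ln 2 + ln (real n + 2))" by auto
    show ?thesis unfolding eq by (rule filterlim_tendsto_add_at_top[OF tendsto_const l2])
  qed
  have l4: "filterlim (\<lambda>n. (x * c / r^2) * (ln (real n + 2) - ln 2)) at_top sequentially"
    by (rule filterlim_tendsto_pos_mult_at_top[OF tendsto_const K0 l3])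
  show ?thesis
    by (rule filterlim_at_top_mono[OF l4], rule always_eventually, rule allI, rule u_lower)
qed

definition t :: "nat \<Rightarrow> real" where "t n = inverse (u n)"

lemma t_lim: "t \<longlonglongrightarrow> 0"
  unfolding t_def by (rule tendsto_inverse_0_at_top[OF u_at_top])

lemma t_nonneg: "t n \<ge> 0" unfolding t_def using u_pos[of n] by simp

lemma t_mono: "t (Suc n) \<le> t n"
proof -
  have "x * B (Suc n)^2 / P (Suc (Suc n)) \<ge> 0"
    by (rule divide_nonneg_pos[OF mult_nonneg_nonneg[OF less_imp_le[OF x] zero_le_power2] Ppos])
  then have "u n \<le> u (Suc n)" using u_step[of n] by linarith
  then show ?thesis unfolding t_def using u_pos[of n] by (simp add: le_imp_inverse_le)
qed

abbreviation "S n \<equiv> cf_conv (sq r) x n"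

lemma S_eq: "S n = AA (sq r) x n / B n"
  using conv_formula[of "sq r" x n] sq_nonneg x by blast

lemma S_diff: "S (Suc n) - S n = (-1)^n * t n"
proof -
  have b1: "B n > 0" "B (Suc n) > 0" using Bpos by auto
  have "S (Suc n) - S n = (AA (sq r) x (Suc n) * B n - AA (sq r) x n * B (Suc n)) / (B (Suc n) * B n)"
    unfolding S_eq using b1 by (simp add: field_simps)
  also have "\<dots> = (-1)^n * P (Suc n) / (B (Suc n) * B n)"
    unfolding det_formula by simp
  also have "\<dots> = (-1)^n * t n" unfolding t_def u_def by simp
  finally show ?thesis .
qed

lemma S_sum: "S n = (\<Sum>i<n. (-1)^i * t i)"
proof (induction n)
  case 0 then show ?case by (simp add: cf_conv_def)
next
  case (Suc n)
  then show ?case using S_diff[of n] by simp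
qed

lemma S_conv: "S \<longlonglongrightarrow> lim S"
proof -
  have "summable (\<lambda>n. (-1)^n * t n)"
    by (rule summable_Leibniz'(1)[OF t_lim t_nonneg t_mono])
  then have h: "S \<longlonglongrightarrow> (\<Sum>n. (-1)^n * t n)"
    unfolding S_sum by (rule summable_LIMSEQ)
  then have "lim S = (\<Sum>n. (-1)^n * t n)" by (rule limI)
  with h show ?thesis by simp
qed

lemma S_convergent: "convergent S" using S_conv convergentI by blast

lemma S_nonneg: "S n \<ge> 0"
  unfolding cf_conv_def cf_aux_cfw using cfw_nonneg[of "sq r" x 0] sq_nonneg x by simp

lemma lim_nonneg: "lim S \<ge> 0"
  using S_conv S_nonneg by (intro LIMSEQ_le_const) auto

end

lemma med_bound:
  fixes p q a b L :: real
  assumes "p > 0" "q \<ge> 0"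
  shows "\<bar>(p*a + q*b)/(p+q) - L\<bar> \<le> \<bar>a - L\<bar> + \<bar>b - L\<bar>"
proof -
  have pq: "p + q > 0" using assms by simp
  have "(p*a + q*b)/(p+q) - L = (p*(a-L) + q*(b-L))/(p+q)" using pq by (simp add: field_simps)
  also have "\<bar>\<dots>\<bar> \<le> (p*\<bar>a-L\<bar> + q*\<bar>b-L\<bar>)/(p+q)"
    using pq assms by (simp add: divide_right_mono abs_triangle_ineq[THEN order_trans] abs_mult)
  also have "\<dots> \<le> ((p+q)*\<bar>a-L\<bar> + (p+q)*\<bar>b-L\<bar>)/(p+q)"
    using pq assms by (intro divide_right_mono add_mono mult_right_mono) auto
  also have "\<dots> = \<bar>a - L\<bar> + \<bar>b - L\<bar>" using pq by (simp add: field_simps)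
  finally show ?thesis .
qed


context
  fixes r x :: real
  assumes r: "r > 0" and x: "x > 0"
begin

lemma AA_eq: "AA (sq r) x n = B r x n * S r x n"
  using S_eq[OF r x, of n] Bpos[OF r x, of n] by simp

lemma tail_lim:
  assumes ev: "eventually (\<lambda>M. w M \<ge> 0) sequentially"
  shows "(\<lambda>M. cfw (sq r) x 1 (Suc M) (w M)) \<longlonglongrightarrow> lim (S r x)"
proof -
  let ?L = "lim (S r x)"
  have SL: "S r x \<longlonglongrightarrow> ?L" by (rule S_conv[OF r x])
  have g0: "(\<lambda>M. \<bar>S r x (Suc M) - ?L\<bar> + \<bar>S r x M - ?L\<bar>) \<longlonglongrightarrow> 0"
  proof -
    have a1: "(\<lambda>M. S r x (Suc M) - ?L) \<longlonglongrightarrow> 0"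
      using LIMSEQ_Suc[OF SL] by (simp add: LIM_zero)
    have a2: "(\<lambda>M. S r x M - ?L) \<longlonglongrightarrow> 0" using SL by (simp add: LIM_zero)
    have "(\<lambda>M. \<bar>S r x (Suc M) - ?L\<bar> + \<bar>S r x M - ?L\<bar>) \<longlonglongrightarrow> \<bar>0\<bar> + \<bar>0\<bar>"
      by (intro tendsto_add tendsto_rabs a1 a2)
    then show ?thesis by simp
  qed
  have "eventually (\<lambda>M. norm (cfw (sq r) x 1 (Suc M) (w M) - ?L)
          \<le> \<bar>S r x (Suc M) - ?L\<bar> + \<bar>S r x M - ?L\<bar>) sequentially"
    using ev
  proof (rule eventually_mono)
    fix M assume w0: "w M \<ge> 0"
    have "cfw (sq r) x 1 (Suc M) (w M)
       = (AA (sq r) x (Suc M) + w M * AA (sq r) x M) / (B r x (Suc M) + w M * B r x M)"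
      by (rule cfw_formula[OF _ x w0]) (rule sq_nonneg)
    also have "\<dots> = (B r x (Suc M) * S r x (Suc M) + (w M * B r x M) * S r x M) / (B r x (Suc M) + w M * B r x M)"
      unfolding AA_eq by (simp add: algebra_simps)
    finally have e: "cfw (sq r) x 1 (Suc M) (w M) = \<dots>" .
    have "w M * B r x M \<ge> 0" using w0 Bpos[OF r x, of M] by simp
    then show "norm (cfw (sq r) x 1 (Suc M) (w M) - ?L)
          \<le> \<bar>S r x (Suc M) - ?L\<bar> + \<bar>S r x M - ?L\<bar>"
      unfolding e real_norm_def by (intro med_bound Bpos[OF r x])
  qed
  then have "(\<lambda>M. cfw (sq r) x 1 (Suc M) (w M) - ?L) \<longlonglongrightarrow> 0"
    by (rule Lim_null_comparison[OF _ g0])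
  then show ?thesis by (simp add: LIM_zero_iff)
qed

end

definition Inv :: "real \<Rightarrow> real \<Rightarrow> nat \<Rightarrow> real \<Rightarrow> real \<Rightarrow> bool" where
  "Inv r x n p q \<longleftrightarrow> ((x - (2*real n - 1)*r)/2 + p) * ((x + (2*real n + 1)*r)/2 + q) = (x+r)^2/4"

lemma Inv_step:
  assumes h: "Inv r x (Suc k) v vv" and U: "x + v \<noteq> 0" and V: "x + 2*r + vv \<noteq> 0"
  shows "Inv r x k (sq r k/(x+v)) (sq r k/(x+2*r+vv))"
proof -
  define n where "n = real k"
  define a where "a = n^2 * r^2"
  define T where "T = a/(x+v)"
  define T' where "T' = a/(x+2*r+vv)"
  have TU: "T * (x+v) = a" unfolding T_def using U by simp
  have TV: "T' * (x+2*r+vv) = a" unfolding T'_def using V by simp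
  have H: "((x - (2*n + 1)*r)/2 + v) * ((x + (2*n + 3)*r)/2 + vv) = (x+r)^2/4"
    using h unfolding Inv_def n_def by (simp add: algebra_simps)
  define P where "P = (x - (2*n - 1)*r)/2"
  define Q where "Q = (x + (2*n + 1)*r)/2"
  define U where "U = x + v"
  define V where "V = x + 2*r + vv"
  define c where "c = (x+r)^2/4"
  have cPQ: "c = P*Q + a" unfolding c_def P_def Q_def a_def by (simp add: field_simps power2_eq_square)
  have UQ: "U - Q = (x - (2*n + 1)*r)/2 + v" unfolding U_def Q_def by (simp add: field_simps)
  have VP: "V - P = (x + (2*n + 3)*r)/2 + vv" unfolding V_def P_def by (simp add: field_simps)
  have g1: "\<And>P Q T T' U V c :: real. ((P+T)*(Q+T') - c)*(U*V) = (P*U + T*U)*(Q*V + T'*V) - c*(U*V)"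
    by (simp add: algebra_simps)
  have g2: "\<And>P Q U V c a :: real. c = P*Q + a \<Longrightarrow> (P*U + a)*(Q*V + a) - c*(U*V) = -a*((U-Q)*(V-P) - c)"
    by (simp add: algebra_simps)
  have key: "((P+T)*(Q+T') - c)*(U*V) = -a*((U-Q)*(V-P) - c)"
    unfolding g1 using TU TV g2[OF cPQ] unfolding U_def V_def by simp
  have HH: "(U-Q)*(V-P) - c = 0" unfolding UQ VP c_def using H by simp
  have "(P+T)*(Q+T') - c = 0" using key HH U V unfolding U_def V_def by simp
  then have "((x - (2*n - 1)*r)/2 + T) * ((x + (2*n + 1)*r)/2 + T') - (x+r)^2/4 = 0"
    unfolding P_def Q_def c_def .
  then show ?thesis unfolding Inv_def T_def T'_def a_def n_def sq_def by simp
qed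

lemma Inv_cfw:
  assumes r: "r > 0" and x: "x > 0"
  shows "Inv r x (k+m) w w' \<Longrightarrow> w \<ge> 0 \<Longrightarrow> w' \<ge> 0 \<Longrightarrow>
    Inv r x k (cfw (sq r) x k m w) (cfw (sq r) (x+2*r) k m w')"
proof (induction m arbitrary: k)
  case 0 then show ?case by simp
next
  case (Suc m)
  have "Inv r x (Suc k) (cfw (sq r) x (Suc k) m w) (cfw (sq r) (x+2*r) (Suc k) m w')"
    using Suc by simp
  moreover have "cfw (sq r) x (Suc k) m w \<ge> 0"
    using cfw_nonneg[of "sq r" x w] sq_nonneg x Suc by simp
  moreover have "cfw (sq r) (x+2*r) (Suc k) m w' \<ge> 0"
    using cfw_nonneg[of "sq r" "x+2*r" w'] sq_nonneg x r Suc by simp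
  ultimately show ?case using x r Inv_step by simp
qed


lemma value_rel:
  assumes r: "r > 0" and x: "x > 0"
  shows "((x - r)/2 + lim (S r x)) * ((x + 3*r)/2 + lim (S r (x+2*r))) = (x+r)^2/4"
proof -
  have y: "x + 2*r > 0" using r x by simp
  define w where "w M = (x+r)^2/(2*(x + (2*real (M+2)+1)*r)) - (x - (2*real (M+2)-1)*r)/2" for M
  have ev: "eventually (\<lambda>M. w M \<ge> 0) sequentially"
    unfolding eventually_sequentially
  proof (intro exI allI impI)
    fix M assume M: "M \<ge> nat \<lceil>x/r\<rceil>"
    then have "real M \<ge> x/r" by linarith
    then have "real M * r \<ge> x" using r by (simp add: field_simps)
    moreover have e: "(2*real (M+2)-1)*r = real M * r + (real M * r + 3*r)" by (simp add: algebra_simps)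
    moreover have "real M * r \<ge> 0" using r by simp
    moreover have "\<And>x m r::real. x \<le> m \<Longrightarrow> 0 \<le> m \<Longrightarrow> 0<r \<Longrightarrow> (x - (m + (m + 3*r)))/2 \<le> 0"
      by simp
    ultimately have a: "(x - (2*real (M+2)-1)*r)/2 \<le> 0" using r unfolding e by blast
    have "(x+r)^2/(2*(x + (2*real (M+2)+1)*r)) \<ge> 0" using r x by simp
    then show "w M \<ge> 0" unfolding w_def using a by linarith
  qed
  have inv: "Inv r x 1 (cfw (sq r) x 1 (Suc M) (w M)) (cfw (sq r) (x+2*r) 1 (Suc M) 0)" if w0: "w M \<ge> 0" for M
  proof (rule Inv_cfw[OF r x _ w0])
    have d: "x + (2*real (M+2)+1)*r > 0" using r x by (simp add: add_pos_pos)
    have "((x - (2*real (M+2)-1)*r)/2 + w M) * ((x + (2*real (M+2)+1)*r)/2 + 0) = (x+r)^2/4"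
      unfolding w_def using d by (simp add: field_simps power2_eq_square)
    moreover have "real (1 + Suc M) = real (M+2)" by simp
    ultimately show "Inv r x (1 + Suc M) (w M) 0" unfolding Inv_def by simp
  qed simp
  let ?a = "\<lambda>M. cfw (sq r) x 1 (Suc M) (w M)"
  let ?b = "\<lambda>M. S r (x+2*r) (Suc M)"
  have la: "?a \<longlonglongrightarrow> lim (S r x)" by (rule tail_lim[OF r x ev])
  have lb: "?b \<longlonglongrightarrow> lim (S r (x+2*r))" by (rule LIMSEQ_Suc[OF S_conv[OF r y]])
  have l1: "(\<lambda>M. ((x - r)/2 + ?a M) * ((x + 3*r)/2 + ?b M))
      \<longlonglongrightarrow> ((x - r)/2 + lim (S r x)) * ((x + 3*r)/2 + lim (S r (x+2*r)))"
    by (intro tendsto_intros la lb)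
  have "eventually (\<lambda>M. ((x - r)/2 + ?a M) * ((x + 3*r)/2 + ?b M) = (x+r)^2/4) sequentially"
    using ev
  proof (rule eventually_mono)
    fix M assume "w M \<ge> 0"
    from inv[OF this] show "((x - r)/2 + ?a M) * ((x + 3*r)/2 + ?b M) = (x+r)^2/4"
      unfolding Inv_def cf_conv_def cf_aux_cfw by simp
  qed
  then have l2: "(\<lambda>M. ((x - r)/2 + ?a M) * ((x + 3*r)/2 + ?b M)) \<longlonglongrightarrow> (x+r)^2/4"
    by (rule tendsto_eventually)
  from LIMSEQ_unique[OF l1 l2] show ?thesis .
qed

lemma fcf_rel:
  assumes r: "r > 0" and x: "x > 0"
  shows "1 / (2*x + 2*lim (S r x)) + 1 / (2*(x+2*r) + 2*lim (S r (x+2*r))) = 1/(x+r)"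
proof -
  have y: "x + 2*r > 0" using r x by simp
  define A where "A = x + lim (S r x)"
  define Bv where "Bv = x + 2*r + lim (S r (x+2*r))"
  have A0: "A > 0" unfolding A_def using lim_nonneg[OF r x] x by simp
  have B0: "Bv > 0" unfolding Bv_def using lim_nonneg[OF r y] y by simp
  have "(A - (x+r)/2) * (Bv - (x+r)/2) = (x+r)^2/4"
    using value_rel[OF r x] unfolding A_def Bv_def by (simp add: field_simps)
  then have e: "A * Bv * 2 = (x+r) * (A + Bv)"
    by (simp add: field_simps power2_eq_square)
  have xr: "x + r > 0" using x r by simp
  have "1/(2*A) + 1/(2*Bv) = (A + Bv)/(2*A*Bv)" using A0 B0 by (simp add: field_simps)
  also have "\<dots> = 1/(x+r)"
  proof -
    have e2: "2*A*Bv = (x+r)*(A+Bv)" using e by (simp add: algebra_simps)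
    have "A + Bv > 0" using A0 B0 by simp
    then show ?thesis unfolding e2 by simp
  qed
  finally show ?thesis unfolding A_def Bv_def by (simp add: algebra_simps)
qed


theorem theorem8:
  fixes \<psi> :: "real \<Rightarrow> real" and r :: real
  assumes "r > 0"
  shows "(\<forall>s. s > - \<psi> r \<longrightarrow> convergent (cf_conv (\<lambda>n. (real n)^2 * r^2) (phi \<psi> s r)))
    \<and> (\<forall>s. s > - \<psi> r \<longrightarrow> fcf \<psi> s r + fcf \<psi> (s + 2*r) r = 1 / (phi \<psi> s r + r))
    \<and> ((\<lambda>s. fcf \<psi> s r) \<longlongrightarrow> 0) at_top
    \<and> (\<forall>g :: real \<Rightarrow> real.
         (\<forall>s. s > - \<psi> r \<longrightarrow> g s + g (s + 2*r) = 1 / (phi \<psi> s r + r))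
         \<and> (g \<longlongrightarrow> 0) at_top
         \<longrightarrow> (\<forall>s. s > - \<psi> r \<longrightarrow> g s = fcf \<psi> s r))"
proof -
  have r: "r > 0" by fact
  have eqa: "(\<lambda>n. (real n)^2 * r^2) = sq r" by (simp add: sq_def fun_eq_iff)
  have fcf_eq: "fcf \<psi> s r = 1 / (2 * phi \<psi> s r + 2 * lim (S r (phi \<psi> s r)))" for s
    unfolding fcf_def cfK_def eqa ..
  have phi_pos: "phi \<psi> s r > 0" if "s > - \<psi> r" for s using that by (simp add: phi_def)
  have phi2: "phi \<psi> (s + 2*r) r = phi \<psi> s r + 2*r" for s by (simp add: phi_def)
  have C1: "\<forall>s. s > - \<psi> r \<longrightarrow> convergent (cf_conv (\<lambda>n. (real n)^2 * r^2) (phi \<psi> s r))"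
    unfolding eqa using S_convergent[OF r phi_pos] by blast
  have C2: "\<forall>s. s > - \<psi> r \<longrightarrow> fcf \<psi> s r + fcf \<psi> (s + 2*r) r = 1 / (phi \<psi> s r + r)"
  proof (intro allI impI)
    fix s assume s: "s > - \<psi> r"
    show "fcf \<psi> s r + fcf \<psi> (s + 2*r) r = 1 / (phi \<psi> s r + r)"
      unfolding fcf_eq phi2 by (rule fcf_rel[OF r phi_pos[OF s]])
  qed
  have C3: "((\<lambda>s. fcf \<psi> s r) \<longlongrightarrow> 0) at_top"
  proof (rule Lim_null_comparison)
    show "eventually (\<lambda>s. norm (fcf \<psi> s r) \<le> inverse (2 * (s + \<psi> r))) at_top"
      using eventually_gt_at_top[of "- \<psi> r"]
    proof (rule eventually_mono)
      fix s assume s: "s > - \<psi> r"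
      have p: "phi \<psi> s r > 0" by (rule phi_pos[OF s])
      have l: "lim (S r (phi \<psi> s r)) \<ge> 0" by (rule lim_nonneg[OF r p])
      have d: "2 * phi \<psi> s r \<le> 2 * phi \<psi> s r + 2 * lim (S r (phi \<psi> s r))" using l by simp
      have "norm (fcf \<psi> s r) = 1 / (2 * phi \<psi> s r + 2 * lim (S r (phi \<psi> s r)))"
        unfolding fcf_eq using p l by simp
      also have "\<dots> \<le> 1 / (2 * phi \<psi> s r)"
        using p d by (intro divide_left_mono) auto
      finally show "norm (fcf \<psi> s r) \<le> inverse (2 * (s + \<psi> r))"
        by (simp add: phi_def divide_inverse)
    qed
    have f1: "filterlim (\<lambda>s. \<psi> r + s) at_top at_top"
      by (rule filterlim_tendsto_add_at_top[OF tendsto_const filterlim_ident])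
    have f2: "filterlim (\<lambda>s. 2 * (\<psi> r + s)) at_top at_top"
      by (rule filterlim_tendsto_pos_mult_at_top[OF tendsto_const _ f1]) simp
    have "((\<lambda>s. inverse (2 * (\<psi> r + s))) \<longlongrightarrow> 0) at_top"
      by (rule tendsto_inverse_0_at_top[OF f2])
    then show "((\<lambda>s. inverse (2 * (s + \<psi> r))) \<longlongrightarrow> 0) at_top"
      by (simp add: add.commute)
  qed
  have C4: "\<forall>g :: real \<Rightarrow> real.
         (\<forall>s. s > - \<psi> r \<longrightarrow> g s + g (s + 2*r) = 1 / (phi \<psi> s r + r))
         \<and> (g \<longlongrightarrow> 0) at_top
         \<longrightarrow> (\<forall>s. s > - \<psi> r \<longrightarrow> g s = fcf \<psi> s r)"
  proof (intro allI impI)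
    fix g :: "real \<Rightarrow> real" and s :: real
    assume G: "(\<forall>s. s > - \<psi> r \<longrightarrow> g s + g (s + 2*r) = 1 / (phi \<psi> s r + r)) \<and> (g \<longlongrightarrow> 0) at_top"
    assume s: "s > - \<psi> r"
    define h where "h s = g s - fcf \<psi> s r" for s
    have hrec: "h (s' + 2*r) = - h s'" if "s' > - \<psi> r" for s'
      using G C2 that unfolding h_def by force
    have hk: "h (s + 2*r*real k) = (-1)^k * h s" for k
    proof (induction k)
      case 0 then show ?case by simp
    next
      case (Suc k)
      have "s + 2*r*real k > - \<psi> r" using s r by (simp add: add_pos_nonneg order_less_le_trans)
      then have X: "h (s + 2*r*real k + 2*r) = - h (s + 2*r*real k)" by (rule hrec)
      have e: "s + 2*r*real (Suc k) = s + 2*r*real k + 2*r" by (simp add: algebra_simps)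
      show ?case by (simp only: e X Suc.IH) simp
    qed
    have hlim: "(h \<longlongrightarrow> 0) at_top"
      unfolding h_def using tendsto_diff[OF conjunct2[OF G] C3] by simp
    have fk: "filterlim (\<lambda>k. s + 2*r*real k) at_top sequentially"
      by (rule filterlim_tendsto_add_at_top[OF tendsto_const
            filterlim_tendsto_pos_mult_at_top[OF tendsto_const _ filterlim_real_sequentially]])
        (use r in simp)
    have "(\<lambda>k. h (s + 2*r*real k)) \<longlonglongrightarrow> 0"
      using filterlim_compose[OF hlim fk] by (simp add: o_def)
    then have "(\<lambda>k. \<bar>h (s + 2*r*real k)\<bar>) \<longlonglongrightarrow> \<bar>0\<bar>" by (rule tendsto_rabs)
    moreover have "(\<lambda>k. \<bar>h (s + 2*r*real k)\<bar>) = (\<lambda>k. \<bar>h s\<bar>)"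
      unfolding hk by (simp add: abs_mult)
    ultimately have "(\<lambda>k. \<bar>h s\<bar>) \<longlonglongrightarrow> 0" by simp
    then have "\<bar>h s\<bar> = 0" using LIMSEQ_const_iff by blast
    then show "g s = fcf \<psi> s r" unfolding h_def by simp
  qed
  show ?thesis using C1 C2 C3 C4 by blast
qed

end
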